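(* Let $(\alpha_j,\rho_j)_{j\in\mathbb{Z}}$ be a sequence of pairs $(\alpha_j,\rho_j)\in\mathbb{C}^2$ with $|\alpha_j|^2+|\rho_j|^2=1$, and let $\mathcal E=\mathcal L\mathcal M$ be the associated generalized extended CMV matrix on $\ell^2(\mathbb{Z})$. Identify $\ell^2(\mathbb{Z})$ with $\ell^2(\mathbb{Z})\otimes\mathbb{C}^2$ via $\delta_{2j-1}\mapsto\delta_j^+$ and $\delta_{2j}\mapsto\delta_j^-$. Then under this identification $$\mathcal E=S_+C_1S_-C_2,$$ where $C_1,C_2$ are the coin operators with local coins $C_1(j)=\sigma_1\Theta(\alpha_{2j},\rho_{2j})$ and $C_2(j)=\sigma_1\Theta(\alpha_{2j-1},\rho_{2j-1})$, and $\sigma_1=\begin{bmatrix}0&1\\1&0\end{bmatrix}$.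
   Context: For $(\alpha,\rho)\in\mathbb{C}^2$ with $|\alpha|^2+|\rho|^2=1$, $\Theta(\alpha,\rho)=\begin{bmatrix}\bar\alpha&\rho\\ \bar\rho&-\alpha\end{bmatrix}$. $\mathcal L=\bigoplus_{j\in\mathbb{Z}}\Theta(\alpha_{2j},\rho_{2j})$ and $\mathcal M=\bigoplus_{j\in\mathbb{Z}}\Theta(\alpha_{2j+1},\rho_{2j+1})$, where each block $\Theta(\alpha_i,\rho_i)$ acts on $\ell^2(\{i,i+1\})$ as a matrix with respect to the basis $(\delta_i,\delta_{i+1})$; $\mathcal E=\mathcal L\mathcal M$. On $\ell^2(\mathbb{Z})\otimes\mathbb{C}^2$ with basis $\delta_j^\pm=\delta_j\otimes e_\pm$ ($e_+=(1,0)^\top$, $e_-=(0,1)^\top$), $S_\pm=T^{\pm1}\otimes P_\pm+\mathbb{1}\otimes P_\mp$ where $T\delta_j=\delta_{j+1}$ and $P_\pm=|e_\pm\rangle\langle e_\pm|$; a coin operator acts as $C(\delta_j\otimes v)=\delta_j\otimes C(j)v$. *)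

theory Defs
  imports "HOL-Analysis.Analysis"
begin

text \<open>Operators on l2(Z) are represented by their (finitely banded) action on
  sequences int => complex; vectors of l2(Z) (x) C^2 are functions int => complex^2,
  with e_plus = component 1 and e_minus = component 2.\<close>

definition Theta :: "complex \<Rightarrow> complex \<Rightarrow> complex^2^2" where
  "Theta a r = vector [vector [cnj a, r], vector [cnj r, - a]]"

definition sigma1 :: "complex^2^2" where
  "sigma1 = vector [vector [0, 1], vector [1, 0]]"

text \<open>Direct sum of blocks Theta(alpha_i, rho_i) acting on l2({i,i+1}) w.r.t.
  the basis (delta_i, delta_(i+1)), for all i with i = s (mod 2).\<close>
definition theta_blocks :: "int \<Rightarrow> (int \<Rightarrow> complex) \<Rightarrow> (int \<Rightarrow> complex) \<Rightarrow> (int \<Rightarrow> complex) \<Rightarrow> (int \<Rightarrow> complex)" where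
  "theta_blocks s \<alpha> \<rho> v n =
     (let i = (if even (n - s) then n else n - 1);
          w = Theta (\<alpha> i) (\<rho> i) *v vector [v i, v (i + 1)]
      in if n = i then w $ 1 else w $ 2)"

definition CMV_L :: "(int \<Rightarrow> complex) \<Rightarrow> (int \<Rightarrow> complex) \<Rightarrow> (int \<Rightarrow> complex) \<Rightarrow> (int \<Rightarrow> complex)" where
  "CMV_L \<alpha> \<rho> = theta_blocks 0 \<alpha> \<rho>"

definition CMV_M :: "(int \<Rightarrow> complex) \<Rightarrow> (int \<Rightarrow> complex) \<Rightarrow> (int \<Rightarrow> complex) \<Rightarrow> (int \<Rightarrow> complex)" where
  "CMV_M \<alpha> \<rho> = theta_blocks 1 \<alpha> \<rho>"

definition CMV_E :: "(int \<Rightarrow> complex) \<Rightarrow> (int \<Rightarrow> complex) \<Rightarrow> (int \<Rightarrow> complex) \<Rightarrow> (int \<Rightarrow> complex)" where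
  "CMV_E \<alpha> \<rho> v = CMV_L \<alpha> \<rho> (CMV_M \<alpha> \<rho> v)"

text \<open>Shifts S_plus = T (x) P_plus + 1 (x) P_minus and S_minus = T^-1 (x) P_minus + 1 (x) P_plus,
  where (T psi)(j) = psi(j-1) since T delta_j = delta_(j+1).\<close>
definition S_plus :: "(int \<Rightarrow> complex^2) \<Rightarrow> (int \<Rightarrow> complex^2)" where
  "S_plus \<psi> j = vector [\<psi> (j - 1) $ 1, \<psi> j $ 2]"

definition S_minus :: "(int \<Rightarrow> complex^2) \<Rightarrow> (int \<Rightarrow> complex^2)" where
  "S_minus \<psi> j = vector [\<psi> j $ 1, \<psi> (j + 1) $ 2]"

definition coin_op :: "(int \<Rightarrow> complex^2^2) \<Rightarrow> (int \<Rightarrow> complex^2) \<Rightarrow> (int \<Rightarrow> complex^2)" where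
  "coin_op C \<psi> j = C j *v \<psi> j"

definition ident :: "(int \<Rightarrow> complex) \<Rightarrow> (int \<Rightarrow> complex^2)" where
  "ident v j = vector [v (2 * j - 1), v (2 * j)]"

end

theory Submission
  imports Defs
begin

lemma v2_1[simp]: "(vector [a, b] :: 'a::zero^2) $ 1 = a" by (simp add: vector_def)
lemma v2_2[simp]: "(vector [a, b] :: 'a::zero^2) $ 2 = b" by (simp add: vector_def)

lemma mv2: "(M :: complex^2^2) *v x = vector [M$1$1 * x$1 + M$1$2 * x$2, M$2$1 * x$1 + M$2$2 * x$2]"
  by (simp add: vec_eq_iff forall_2 matrix_vector_mult_def sum_2)

lemma mm2: "(A :: complex^2^2) ** (B :: complex^2^2) = vector [vector [A$1$1*B$1$1 + A$1$2*B$2$1, A$1$1*B$1$2 + A$1$2*B$2$2],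
   vector [A$2$1*B$1$1 + A$2$2*B$2$1, A$2$1*B$1$2 + A$2$2*B$2$2]]"
  by (simp add: vec_eq_iff forall_2 matrix_matrix_mult_def sum_2 mv2)

lemma TB_i: "even (n - s) \<Longrightarrow> theta_blocks s a r w n = cnj (a n) * w n + r n * w (n+1)"
  by (simp add: theta_blocks_def Let_def mv2 Theta_def)

lemma TB_i1: "even (n - s) \<Longrightarrow> theta_blocks s a r w (n+1) = cnj (r n) * w n - a n * w (n+1)"
  by (simp add: theta_blocks_def Let_def mv2 Theta_def)

theorem lemmaA1:
  fixes \<alpha> \<rho> :: "int \<Rightarrow> complex" and v :: "int \<Rightarrow> complex"
  assumes "\<And>j. (cmod (\<alpha> j))\<^sup>2 + (cmod (\<rho> j))\<^sup>2 = 1"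
    and "(\<lambda>n. (cmod (v n))\<^sup>2) summable_on UNIV"
  shows "ident (CMV_E \<alpha> \<rho> v) =
    S_plus (coin_op (\<lambda>j. sigma1 ** Theta (\<alpha> (2 * j)) (\<rho> (2 * j)))
      (S_minus (coin_op (\<lambda>j. sigma1 ** Theta (\<alpha> (2 * j - 1)) (\<rho> (2 * j - 1))) (ident v))))"
proof (rule ext)
  fix j :: int
  define w where "w = CMV_M \<alpha> \<rho> v"
  have M1: "w (2*k - 1) = cnj (\<alpha> (2*k-1)) * v (2*k-1) + \<rho> (2*k-1) * v (2*k)" for k
    using TB_i[of "2*k-1" 1 \<alpha> \<rho> v] by (simp add: w_def CMV_M_def)
  have M2: "w (2*k) = cnj (\<rho> (2*k-1)) * v (2*k-1) - \<alpha> (2*k-1) * v (2*k)" for k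
    using TB_i1[of "2*k-1" 1 \<alpha> \<rho> v] by (simp add: w_def CMV_M_def)
  have L1: "CMV_L \<alpha> \<rho> w (2*k) = cnj (\<alpha> (2*k)) * w (2*k) + \<rho> (2*k) * w (2*k+1)" for k
    using TB_i[of "2*k" 0 \<alpha> \<rho> w] by (simp add: CMV_L_def)
  have L2: "CMV_L \<alpha> \<rho> w (2*k+1) = cnj (\<rho> (2*k)) * w (2*k) - \<alpha> (2*k) * w (2*k+1)" for k
    using TB_i1[of "2*k" 0 \<alpha> \<rho> w] by (simp add: CMV_L_def)
  have L2': "CMV_L \<alpha> \<rho> w (2*j-1) = cnj (\<rho> (2*(j-1))) * w (2*(j-1)) - \<alpha> (2*(j-1)) * w (2*(j-1)+1)"
    using L2[of "j-1"] by (simp add: algebra_simps)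
  have W1: "w (2*j+1) = w (2*(j+1) - 1)" by (simp add: algebra_simps)
  have W2: "w (2*(j-1)+1) = w (2*j - 1)" by (simp add: algebra_simps)
  have X1: "v (2*(j+1) - 1) = v (2*j+1)" "v (2*(j+1)) = v (2*j+2)"
    "\<alpha> (2*(j+1) - 1) = \<alpha> (2*j+1)" "\<rho> (2*(j+1) - 1) = \<rho> (2*j+1)"
    "\<alpha> (2*(j-1)) = \<alpha> (2*j-2)" "\<rho> (2*(j-1)) = \<rho> (2*j-2)"
    "v (2*(j-1) - 1) = v (2*j-3)" "v (2*(j-1)) = v (2*j-2)"
    "\<alpha> (2*(j-1) - 1) = \<alpha> (2*j-3)" "\<rho> (2*(j-1) - 1) = \<rho> (2*j-3)"
    by (simp_all add: algebra_simps)
  have Ma: "w (2*j+1) = cnj (\<alpha> (2*j+1)) * v (2*j+1) + \<rho> (2*j+1) * v (2*j+2)"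
    using M1[of "j+1"] X1 by (simp add: algebra_simps)
  have Mb: "w (2*j-2) = cnj (\<rho> (2*j-3)) * v (2*j-3) - \<alpha> (2*j-3) * v (2*j-2)"
    using M2[of "j-1"] X1 by (simp add: algebra_simps)
  show "ident (CMV_E \<alpha> \<rho> v) j = S_plus (coin_op (\<lambda>j. sigma1 ** Theta (\<alpha> (2 * j)) (\<rho> (2 * j)))
      (S_minus (coin_op (\<lambda>j. sigma1 ** Theta (\<alpha> (2 * j - 1)) (\<rho> (2 * j - 1))) (ident v)))) j"
    unfolding CMV_E_def w_def[symmetric]
    apply (simp add: vec_eq_iff forall_2 ident_def S_plus_def S_minus_def coin_op_def mv2 mm2
        sigma1_def Theta_def L1 L2' M1[of j] M2[of j] X1)
    apply (simp add: Ma Mb)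
    apply (simp add: algebra_simps)
    done
qed

end
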